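(* Let $\gamma>0$ and $\alpha=2/\gamma^2$. Then for all $z\in\mathbb{C}$ and $x\in\mathbb{R}$, $$\mathcal{A}^\gamma_{RBF}(z,x)=\exp\left(-\frac{z^2}{\gamma^2}\right)\mathcal{A}^\alpha_{SB}(z,x).$$
   Context: For $\alpha>0$, the Segal–Bargmann kernel is $\mathcal{A}^\alpha_{SB}(z,x)=\left(\frac{\alpha}{\pi}\right)^{1/4}\exp\left(-\frac{\alpha}{2}(z^2+x^2)+\sqrt2\,\alpha zx\right)$. The normalized weighted Hermite functions are $\psi_n^\alpha(x)=\left(\frac{\alpha}{\pi}\right)^{1/4}(2^nn!)^{-1/2}H_n(\sqrt\alpha\,x)e^{-\alpha x^2/2}$, $n\ge0$, where $H_n$ are the physicists' Hermite polynomials; they form an orthonormal basis of $L^2(\mathbb{R})$. For $\gamma>0$, $e_n^\gamma(z)=\sqrt{\frac{2^n}{\gamma^{2n}n!}}\,z^n\exp(-z^2/\gamma^2)$, and the RBF Segal–Bargmann kernel is $\mathcal{A}^\gamma_{RBF}(z,x)=\sum_{n=0}^\infty e_n^\gamma(z)\psi_n^{\alpha}(x)$ with $\alpha=2/\gamma^2$. *)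

theory Defs
  imports "HOL-Analysis.Analysis"
begin

fun hermite :: "nat \<Rightarrow> real \<Rightarrow> real" where
  "hermite 0 x = 1"
| "hermite (Suc 0) x = 2 * x"
| "hermite (Suc (Suc n)) x = 2 * x * hermite (Suc n) x - 2 * real (Suc n) * hermite n x"

definition hermite_fun :: "real \<Rightarrow> nat \<Rightarrow> real \<Rightarrow> real" where
  "hermite_fun \<alpha> n x =
     (\<alpha> / pi) powr (1/4) * (1 / sqrt (2 ^ n * fact n)) * hermite n (sqrt \<alpha> * x)
       * exp (- \<alpha> * x\<^sup>2 / 2)"

definition SB_kernel :: "real \<Rightarrow> complex \<Rightarrow> real \<Rightarrow> complex" where
  "SB_kernel \<alpha> z x =
     complex_of_real ((\<alpha> / pi) powr (1/4))
       * exp (- (complex_of_real \<alpha> / 2) * (z\<^sup>2 + complex_of_real (x\<^sup>2))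
              + complex_of_real (sqrt 2 * \<alpha>) * z * complex_of_real x)"

definition rbf_e :: "real \<Rightarrow> nat \<Rightarrow> complex \<Rightarrow> complex" where
  "rbf_e \<gamma> n z =
     complex_of_real (sqrt (2 ^ n / (\<gamma> ^ (2 * n) * fact n))) * z ^ n
       * exp (- z\<^sup>2 / complex_of_real (\<gamma>\<^sup>2))"

definition RBF_kernel :: "real \<Rightarrow> complex \<Rightarrow> real \<Rightarrow> complex" where
  "RBF_kernel \<gamma> z x =
     (\<Sum>n. rbf_e \<gamma> n z * complex_of_real (hermite_fun (2 / \<gamma>\<^sup>2) n x))"

end

theory Submission imports Defs "HOL-Complex_Analysis.Complex_Analysis" begin

fun hc :: "nat \<Rightarrow> complex \<Rightarrow> complex" where
  "hc 0 s = 1"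
| "hc (Suc 0) s = 2 * s"
| "hc (Suc (Suc n)) s = 2 * s * hc (Suc n) s - 2 * of_nat (Suc n) * hc n s"

lemma hc_rec: "hc (Suc n) s = 2 * s * hc n s - 2 * of_nat n * hc (n - 1) s"
  by (cases n) auto

lemma hc_real: "hc n (complex_of_real y) = complex_of_real (hermite n y)"
  by (induction n y rule: hermite.induct) auto

lemma hc_deriv: "(hc n has_field_derivative (2 * of_nat n * hc (n - 1) s)) (at s)"
proof (induction n s rule: hc.induct)
  case 1 then show ?case by simp
next
  case (2 x) then show ?case by (auto intro!: derivative_eq_intros)
next
  case (3 n x)
  have e: "hc (Suc (Suc n)) = (\<lambda>s. 2 * s * hc (Suc n) s - 2 * of_nat (Suc n) * hc n s)"
    by auto
  show ?case unfolding e
    apply (rule derivative_eq_intros refl 3 | assumption)+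
    by (simp add: hc_rec[of n x] algebra_simps)
qed

definition gf :: "complex \<Rightarrow> complex \<Rightarrow> complex" where
  "gf y t = exp (2 * y * t - t\<^sup>2)"

lemma gf_higher: "(deriv ^^ n) (gf y) = (\<lambda>t. hc n (y - t) * gf y t)"
proof (induction n)
  case 0 then show ?case by (simp)
next
  case (Suc n)
  have "deriv (\<lambda>t. hc n (y - t) * gf y t) t = hc (Suc n) (y - t) * gf y t" for t
  proof (rule DERIV_imp_deriv)
    have d: "((\<lambda>t. hc n (y - t)) has_field_derivative (2 * of_nat n * hc (n - 1) (y - t)) * (-1)) (at t)"
      by (rule DERIV_chain2[OF hc_deriv]) (auto intro!: derivative_eq_intros)
    show "((\<lambda>t. hc n (y - t) * gf y t) has_field_derivative hc (Suc n) (y - t) * gf y t) (at t)"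
      unfolding gf_def
      apply (rule derivative_eq_intros d refl | assumption)+
      by (simp add: hc_rec[of n "y - t"] algebra_simps power2_eq_square)
  qed
  then show ?case by (simp add: Suc.IH)
qed

lemma gf_sums: "(\<lambda>n. hc n y / fact n * t ^ n) sums gf y t"
proof -
  have "gf y holomorphic_on ball 0 (norm t + 1)"
    unfolding gf_def by (intro holomorphic_intros)
  from holomorphic_power_series[OF this, of t]
  show ?thesis by (simp add: gf_higher gf_def)
qed

lemma coef: assumes "\<gamma> > 0"
  shows "sqrt (2 ^ n / (\<gamma> ^ (2 * n) * fact n)) * (1 / sqrt (2 ^ n * fact n)) = 1 / (\<gamma> ^ n * fact n)"
proof -
  have e: "\<gamma> ^ (2 * n) = (\<gamma> ^ n)\<^sup>2" by (simp add: power_mult[symmetric] mult.commute)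
  have s: "sqrt (\<gamma> ^ (2 * n)) = \<gamma> ^ n" using assms unfolding e by simp
  have f: "sqrt (fact n) * sqrt (fact n) = (fact n :: real)" by simp
  have s': "sqrt (\<gamma> ^ (n * 2)) = \<gamma> ^ n" using s by (simp add: mult.commute)
  have f': "sqrt (fact n) * (sqrt (fact n) * a) = (fact n :: real) * a" for a
    by (simp add: mult.assoc[symmetric])
  have p: "sqrt (2 ^ n) > (0::real)" "sqrt (fact n) > (0::real)" by auto
  show ?thesis using assms p
    by (simp add: real_sqrt_divide real_sqrt_mult s s' field_simps f f')
qed

theorem mainTheorem8:
  fixes \<gamma> \<alpha> :: real and z :: complex and x :: real
  assumes "\<gamma> > 0" and "\<alpha> = 2 / \<gamma>\<^sup>2"
  shows "(\<lambda>n. rbf_e \<gamma> n z * complex_of_real (hermite_fun \<alpha> n x)) sums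
           (exp (- z\<^sup>2 / complex_of_real (\<gamma>\<^sup>2)) * SB_kernel \<alpha> z x)
         \<and> RBF_kernel \<gamma> z x = exp (- z\<^sup>2 / complex_of_real (\<gamma>\<^sup>2)) * SB_kernel \<alpha> z x"
proof -
  define y where "y = complex_of_real (sqrt \<alpha> * x)"
  define t where "t = z / complex_of_real \<gamma>"
  define E where "E = exp (- z\<^sup>2 / complex_of_real (\<gamma>\<^sup>2))"
  define C where "C = complex_of_real ((\<alpha> / pi) powr (1/4) * exp (- \<alpha> * x\<^sup>2 / 2)) * E"
  have trm: "rbf_e \<gamma> n z * complex_of_real (hermite_fun \<alpha> n x) = C * (hc n y / fact n * t ^ n)" for n
  proof -
    have c: "complex_of_real (sqrt (2 ^ n / (\<gamma> ^ (2 * n) * fact n))) * complex_of_real (1 / sqrt (2 ^ n * fact n))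
       = 1 / (complex_of_real \<gamma> ^ n * fact n)"
      using coef[OF assms(1), of n] by (metis of_real_mult of_real_divide of_real_1 of_real_power of_real_fact)
    have "rbf_e \<gamma> n z * complex_of_real (hermite_fun \<alpha> n x) =
      (complex_of_real (sqrt (2 ^ n / (\<gamma> ^ (2 * n) * fact n))) * complex_of_real (1 / sqrt (2 ^ n * fact n)))
      * C * hc n y * z ^ n"
      unfolding rbf_e_def hermite_fun_def C_def E_def y_def hc_real by (simp add: algebra_simps)
    also have "\<dots> = C * (hc n y / fact n * t ^ n)"
      unfolding c t_def using assms(1) by (simp add: field_simps power_divide)
    finally show ?thesis .
  qed
  have S: "(\<lambda>n. rbf_e \<gamma> n z * complex_of_real (hermite_fun \<alpha> n x)) sums (C * gf y t)"
    unfolding trm by (intro sums_mult gf_sums)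
  have sa: "sqrt \<alpha> = sqrt 2 / \<gamma>" using assms by (simp add: real_sqrt_divide)
  have "C * gf y t = E * SB_kernel \<alpha> z x"
  proof -
    have "C * gf y t = complex_of_real ((\<alpha> / pi) powr (1/4)) * E *
        exp (complex_of_real (- \<alpha> * x\<^sup>2 / 2) + (2 * y * t - t\<^sup>2))"
      unfolding C_def gf_def by (simp add: of_real_exp algebra_simps flip: exp_add)
    also have "complex_of_real (- \<alpha> * x\<^sup>2 / 2) + (2 * y * t - t\<^sup>2) =
       - (complex_of_real \<alpha> / 2) * (z\<^sup>2 + complex_of_real (x\<^sup>2))
              + complex_of_real (sqrt 2 * \<alpha>) * z * complex_of_real x"
      unfolding y_def t_def sa assms(2) using assms(1)
      using sa by (simp add: field_simps power2_eq_square real_sqrt_divide)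
    finally show ?thesis unfolding SB_kernel_def by (simp add: algebra_simps)
  qed
  with S have S': "(\<lambda>n. rbf_e \<gamma> n z * complex_of_real (hermite_fun \<alpha> n x)) sums (E * SB_kernel \<alpha> z x)" by simp
  moreover have "RBF_kernel \<gamma> z x = E * SB_kernel \<alpha> z x"
    unfolding RBF_kernel_def using S' assms(2) by (simp add: sums_iff)
  ultimately show ?thesis unfolding E_def by simp
qed

end
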